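(* For $\sigma>0$ and $k\in\mathbb{N}$, \[ \|T_k-\mathcal K_G^\sigma T_k\|_\infty\le\sum_{\ell=1}^{\lfloor k/2\rfloor}\frac{(2\ell-1)!!}{(2\ell)!\,(4\ell-1)!!}(k^2\sigma)^{2\ell}. \]
   Context: $T_k(x)=\cos(k\arccos x)$ is the Chebyshev polynomial of the first kind (as a polynomial on $\mathbb{R}$). $\mathcal K_G^\sigma(f)(x)=\int_{\mathbb{R}}\frac1{\sqrt{2\pi}\sigma}\exp\!\left(-\frac{(x-y)^2}{2\sigma^2}\right)f(y)\,dy$. $\|g\|_\infty=\sup_{x\in[-1,1]}|g(x)|$. $(2\ell-1)!!=\prod_{i=1}^\ell(2i-1)$ is the double factorial. *)

theory Defs
  imports "HOL-Analysis.Analysis" "HOL-Computational_Algebra.Polynomial"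
begin

definition chebyshev_T :: "nat \<Rightarrow> real poly" where
  "chebyshev_T k = (THE p. \<forall>x\<in>{-1..1}. poly p x = cos (real k * arccos x))"

definition gauss_smooth :: "real \<Rightarrow> (real \<Rightarrow> real) \<Rightarrow> real \<Rightarrow> real" where
  "gauss_smooth \<sigma> f x =
     (LINT y|lborel. (1 / (sqrt (2 * pi) * \<sigma>)) * exp (- ((x - y)\<^sup>2) / (2 * \<sigma>\<^sup>2)) * f y)"

definition sup_norm_11 :: "(real \<Rightarrow> real) \<Rightarrow> real" where
  "sup_norm_11 g = (SUP x\<in>{-1..1}. \<bar>g x\<bar>)"

text \<open>Double factorial (2l-1)!! = prod_{i=1}^l (2i-1), indexed by l.\<close>
definition odd_dfact :: "nat \<Rightarrow> nat" where
  "odd_dfact l = (\<Prod>i=1..l. 2 * i - 1)"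

end

theory Submission
  imports Defs "HOL-Probability.Distributions"
begin


definition pX :: "real poly" where "pX = [:0,1:]"

fun cheb :: "nat \<Rightarrow> real poly" where
  "cheb 0 = 1"
| "cheb (Suc 0) = pX"
| "cheb (Suc (Suc n)) = 2 * pX * cheb (Suc n) - cheb n"

fun cU :: "nat \<Rightarrow> real poly" where
  "cU 0 = 1"
| "cU (Suc 0) = 2 * pX"
| "cU (Suc (Suc n)) = 2 * pX * cU (Suc n) - cU n"

declare cheb.simps(3)[simp del] cU.simps(3)[simp del]

lemma pderiv_pX[simp]: "pderiv pX = 1" by (simp add: pX_def pderiv_pCons)
lemma poly_pX[simp]: "poly pX x = x" by (simp add: pX_def)
lemma degree_pX[simp]: "degree pX = 1" by (simp add: pX_def)

lemma cheb_cos: "poly (cheb n) (cos t) = cos (real n * t)"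
proof (induction n rule: cheb.induct)
  case (3 n)
  have "cos (real (Suc (Suc n)) * t) = cos ((real (Suc n)) * t + t)"
    by (simp add: algebra_simps)
  also have "\<dots> = 2 * cos t * cos (real (Suc n) * t) - cos (real n * t)"
  proof -
    have "cos (real n * t) = cos (real (Suc n) * t - t)" by (simp add: algebra_simps)
    then show ?thesis by (simp add: cos_add cos_diff)
  qed
  finally show ?case using 3 by (simp add: cheb.simps)
qed auto

lemma cheb_bound: assumes "x \<in> {-1..1}" shows "\<bar>poly (cheb n) x\<bar> \<le> 1"
proof -
  have "x = cos (arccos x)" using assms by simp
  then have "poly (cheb n) x = cos (real n * arccos x)" by (metis cheb_cos)
  then show ?thesis by simp
qed

lemma cheb_one: "poly (cheb n) 1 = 1"
  using cheb_cos[of n 0] by simp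

lemma chebyshev_T_eq: "chebyshev_T k = cheb k"
  unfolding chebyshev_T_def
proof (rule the_equality)
  show "\<forall>x\<in>{-1..1}. poly (cheb k) x = cos (real k * arccos x)"
    by (metis atLeastAtMost_iff cheb_cos cos_arccos)
next
  fix p assume h: "\<forall>x\<in>{-1..1}. poly p x = cos (real k * arccos x)"
  have "{-1..1::real} \<subseteq> {x. poly (p - cheb k) x = 0}"
    using h by (auto simp: cheb_cos[symmetric] cos_arccos)
  moreover have "\<not> finite {-1..1::real}" by simp
  ultimately have "\<not> finite {x. poly (p - cheb k) x = 0}" using finite_subset by blast
  then have "p - cheb k = 0" using poly_roots_finite by blast
  then show "p = cheb k" by simp
qed

lemma degree_cheb: "degree (cheb n) \<le> n"
proof (induction n rule: cheb.induct)
  case (3 n)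
  have "degree (2 * pX * cheb (Suc n)) \<le> Suc (Suc n)"
  proof -
    have "degree (2 * pX * cheb (Suc n)) \<le> degree (2 * pX) + degree (cheb (Suc n))"
      by (rule degree_mult_le)
    moreover have "degree (2 * pX) \<le> 1"
      using degree_mult_le[of 2 pX] by (simp add: pX_def)
    ultimately show ?thesis using 3(1) by simp
  qed
  then show ?case using 3(2) by (simp add: degree_diff_le cheb.simps)
qed auto



lemma pderiv_2X: "pderiv (2 * pX * p) = 2 * p + 2 * pX * pderiv p"
  by (simp add: pderiv_mult algebra_simps)

lemma I1: "cheb (Suc (Suc n)) = pX * cU (Suc n) - cU n"
proof (induction n rule: cheb.induct)
  case 1 then show ?case by (simp add: cheb.simps cU.simps algebra_simps)
next
  case 2 then show ?case by (simp add: cheb.simps cU.simps algebra_simps)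
next
  case (3 n)
  have a: "cheb (Suc (Suc (Suc (Suc n)))) = 2 * pX * cheb (Suc (Suc (Suc n))) - cheb (Suc (Suc n))"
    by (rule cheb.simps(3))
  have b: "cU (Suc (Suc (Suc (Suc n)))) = 2 * pX * cU (Suc (Suc (Suc n))) - cU (Suc (Suc n))"
    by (rule cU.simps(3))
  have c: "cU (Suc (Suc (Suc n))) = 2 * pX * cU (Suc (Suc n)) - cU (Suc n)"
    by (rule cU.simps(3))
  show ?case using 3 a c cU.simps(3)[of n] by algebra
qed

lemma I2: "pderiv (cheb (Suc n)) = of_nat (Suc n) * cU n"
proof (induction n rule: cheb.induct)
  case 1 then show ?case by (simp add: pX_def pderiv_pCons)
next
  case 2 then show ?case by (simp add: cheb.simps cU.simps pderiv_mult pderiv_diff algebra_simps)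
next
  case (3 n)
  have a: "pderiv (cheb (Suc (Suc (Suc n)))) = 2 * cheb (Suc (Suc n)) + 2 * pX * pderiv (cheb (Suc (Suc n))) - pderiv (cheb (Suc n))"
    by (simp only: cheb.simps(3) pderiv_diff pderiv_2X)
  have b: "cU (Suc (Suc n)) = 2 * pX * cU (Suc n) - cU n"
    by (rule cU.simps(3))
  have c: "cheb (Suc (Suc n)) = pX * cU (Suc n) - cU n" by (rule I1)
  have d: "(of_nat (Suc (Suc (Suc n))) :: real poly) = of_nat n + 3"
       "(of_nat (Suc (Suc n)) :: real poly) = of_nat n + 2"
       "(of_nat (Suc n) :: real poly) = of_nat n + 1" by simp_all
  show ?case using 3 a b c d by algebra
qed

lemma I3: "cU (Suc (Suc n)) = cU n + 2 * cheb (Suc (Suc n))"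
proof (induction n rule: cheb.induct)
  case 1 then show ?case by (simp add: cheb.simps cU.simps algebra_simps)
next
  case 2 then show ?case by (simp add: cheb.simps cU.simps algebra_simps)
next
  case (3 n)
  have a: "cheb (Suc (Suc (Suc (Suc n)))) = 2 * pX * cheb (Suc (Suc (Suc n))) - cheb (Suc (Suc n))"
    by (rule cheb.simps(3))
  have b: "cU (Suc (Suc (Suc (Suc n)))) = 2 * pX * cU (Suc (Suc (Suc n))) - cU (Suc (Suc n))"
    by (rule cU.simps(3))
  have c: "cU (Suc (Suc (Suc n))) = 2 * pX * cU (Suc (Suc n)) - cU (Suc n)"
    by (rule cU.simps(3))
  have e: "cheb (Suc (Suc (Suc n))) = 2 * pX * cheb (Suc (Suc n)) - cheb (Suc n)"
    by (rule cheb.simps(3))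
  show ?case using 3 a b c e I1[of n] cU.simps(3)[of n] by algebra
qed

lemma I4: "(1 - pX * pX) * cU n = cheb n - pX * cheb (Suc n)"
proof (induction n rule: cheb.induct)
  case 1 then show ?case by (simp add: cheb.simps cU.simps algebra_simps)
next
  case 2 then show ?case by (simp add: cheb.simps cU.simps algebra_simps)
next
  case (3 n)
  have a: "cheb (Suc (Suc (Suc n))) = 2 * pX * cheb (Suc (Suc n)) - cheb (Suc n)"
    by (rule cheb.simps(3))
  have b: "cU (Suc (Suc n)) = 2 * pX * cU (Suc n) - cU n"
    by (rule cU.simps(3))
  have e: "cheb (Suc (Suc n)) = 2 * pX * cheb (Suc n) - cheb n"
    by (rule cheb.simps(3))
  show ?case using 3 a b e by algebra
qed

lemma I5: "(1 - pX * pX) * pderiv (pderiv (cheb n)) - pX * pderiv (cheb n) + of_nat (n * n) * cheb n = 0"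
proof (induction n rule: cheb.induct)
  case 1 then show ?case by simp
next
  case 2 then show ?case by (simp add: cheb.simps cU.simps algebra_simps)
next
  case (3 n)
  have a: "cheb (Suc (Suc n)) = 2 * pX * cheb (Suc n) - cheb n"
    by (rule cheb.simps(3))
  have b: "pderiv (cheb (Suc (Suc n))) = 2 * cheb (Suc n) + 2 * pX * pderiv (cheb (Suc n)) - pderiv (cheb n)"
    by (simp only: cheb.simps(3) pderiv_diff pderiv_2X)
  have c: "pderiv (pderiv (cheb (Suc (Suc n)))) = 4 * pderiv (cheb (Suc n)) + 2 * pX * pderiv (pderiv (cheb (Suc n))) - pderiv (pderiv (cheb n))"
    by (simp only: b pderiv_diff pderiv_add pderiv_2X pderiv_mult) simp
  have e: "(1 - pX * pX) * pderiv (cheb (Suc n)) = of_nat (Suc n) * (cheb n - pX * cheb (Suc n))"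
    using I2[of n] I4[of n] by (metis mult.left_commute)
  have d: "(of_nat (Suc (Suc n) * Suc (Suc n)) :: real poly) = (of_nat n + 2) * (of_nat n + 2)"
       "(of_nat (Suc n * Suc n) :: real poly) = (of_nat n + 1) * (of_nat n + 1)"
       "(of_nat (Suc n) :: real poly) = of_nat n + 1"
       "(of_nat (n * n) :: real poly) = of_nat n * of_nat n" by (simp_all add: algebra_simps)
  show ?case using 3 a b c d e by algebra
qed




inductive nnc :: "real poly \<Rightarrow> bool" where
  nnc0: "nnc 0"
| nncS: "nnc p \<Longrightarrow> c \<ge> 0 \<Longrightarrow> nnc (p + smult c (cheb j))"

lemma nnc_add: "nnc q \<Longrightarrow> nnc p \<Longrightarrow> nnc (p + q)"
proof (induction q rule: nnc.induct)
  case nnc0 then show ?case by simp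
next
  case (nncS q c j)
  then have "nnc ((p + q) + smult c (cheb j))" by (intro nnc.nncS) auto
  then show ?case by (simp add: add.assoc)
qed

lemma nnc_smult: "nnc p \<Longrightarrow> c \<ge> 0 \<Longrightarrow> nnc (smult c p)"
proof (induction p rule: nnc.induct)
  case nnc0 then show ?case by (simp add: nnc.nnc0)
next
  case (nncS p d j)
  then have "nnc (smult c p + smult (c * d) (cheb j))" by (intro nnc.nncS) auto
  then show ?case by (simp add: smult_add_right)
qed

lemma nnc_cheb: "nnc (cheb j)"
  using nnc.nncS[OF nnc.nnc0, of 1 j] by simp

lemma nnc_2: "nnc p \<Longrightarrow> nnc (2 * p)"
  unfolding mult_2 by (rule nnc_add)

lemma nnc_U: "nnc (cU n)"
proof (induction n rule: cheb.induct)
  case 1 then show ?case using nnc_cheb[of 0] by simp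
next
  case 2
  have "nnc (2 * cheb 1)" by (intro nnc_2 nnc_cheb)
  then show ?case by simp
next
  case (3 n)
  have "nnc (cU n + 2 * cheb (Suc (Suc n)))"
    by (intro nnc_add nnc_2 nnc_cheb 3)
  then show ?case by (simp only: I3)
qed

lemma nnc_dcheb: "nnc (pderiv (cheb j))"
proof (cases j)
  case 0 then show ?thesis by (simp add: nnc.nnc0)
next
  case (Suc n)
  have "nnc (smult (real (Suc n)) (cU n))" by (intro nnc_smult nnc_U) simp
  moreover have "(of_nat (Suc n) :: real poly) * cU n = smult (real (Suc n)) (cU n)"
    by (simp add: of_nat_poly)
  ultimately show ?thesis using Suc I2 by simp
qed

lemma nnc_pderiv: "nnc p \<Longrightarrow> nnc (pderiv p)"
proof (induction p rule: nnc.induct)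
  case nnc0 then show ?case by (simp add: nnc.nnc0)
next
  case (nncS p c j)
  then show ?case by (simp add: pderiv_add pderiv_smult nnc_add nnc_smult nnc_dcheb)
qed

lemma nnc_hpderiv: "nnc ((pderiv ^^ m) (cheb k))"
  by (induction m) (simp_all add: nnc_cheb nnc_pderiv)

lemma nnc_bound: "nnc p \<Longrightarrow> x \<in> {-1..1} \<Longrightarrow> \<bar>poly p x\<bar> \<le> poly p 1"
proof (induction p rule: nnc.induct)
  case nnc0 then show ?case by simp
next
  case (nncS p c j)
  have "\<bar>poly (p + smult c (cheb j)) x\<bar> \<le> \<bar>poly p x\<bar> + c * \<bar>poly (cheb j) x\<bar>"
    using nncS(2) abs_triangle_ineq[of "poly p x" "c * poly (cheb j) x"] by (simp add: abs_mult)
  also have "\<dots> \<le> poly p 1 + c * 1"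
    using nncS cheb_bound[of x j] by (intro add_mono mult_left_mono) auto
  finally show ?case by (simp add: cheb_one)
qed

lemma pderiv_1mXX: "pderiv (1 - pX * pX) = - 2 * pX"
  by (simp add: pderiv_diff pderiv_mult)

lemma ODEm: "(1 - pX * pX) * (pderiv ^^ Suc (Suc m)) (cheb k)
   - of_nat (2 * m + 1) * pX * (pderiv ^^ Suc m) (cheb k)
   + (of_nat (k * k) - of_nat (m * m)) * (pderiv ^^ m) (cheb k) = 0"
proof (induction m)
  case 0
  then show ?case using I5[of k] by (simp add: numeral_2_eq_2)
next
  case (Suc m)
  define q0 where "q0 = (pderiv ^^ m) (cheb k)"
  define q1 where "q1 = (pderiv ^^ Suc m) (cheb k)"
  define q2 where "q2 = (pderiv ^^ Suc (Suc m)) (cheb k)"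
  define q3 where "q3 = (pderiv ^^ Suc (Suc (Suc m))) (cheb k)"
  have d1: "pderiv q0 = q1" "pderiv q1 = q2" "pderiv q2 = q3"
    by (simp_all add: q0_def q1_def q2_def q3_def)
  have h: "(1 - pX * pX) * q2 - of_nat (2 * m + 1) * pX * q1 + (of_nat (k * k) - of_nat (m * m)) * q0 = 0"
    using Suc by (simp add: q0_def q1_def q2_def)
  have "pderiv ((1 - pX * pX) * q2 - of_nat (2 * m + 1) * pX * q1 + (of_nat (k * k) - of_nat (m * m)) * q0) = 0"
    by (simp only: h) simp
  then have h2: "(1 - pX * pX) * q3 + q2 * (- 2 * pX) - of_nat (2 * m + 1) * (pX * q2 + q1)
      + (of_nat (k * k) - of_nat (m * m)) * q1 = 0"
    by (simp add: pderiv_add pderiv_diff pderiv_mult d1 pderiv_1mXX algebra_simps)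
  have e: "(of_nat (2 * Suc m + 1) :: real poly) = of_nat (2 * m + 1) + 2"
     "(of_nat (Suc m * Suc m) :: real poly) = of_nat (m * m) + of_nat (2 * m + 1)"
    by (simp_all add: algebra_simps)
  have "(1 - pX * pX) * q3 - of_nat (2 * Suc m + 1) * pX * q2
   + (of_nat (k * k) - of_nat (Suc m * Suc m)) * q1 = 0"
    unfolding e using h2 by (simp add: algebra_simps)
  then show ?case by (simp add: q1_def q2_def q3_def)
qed

lemma val_rec: "real (2 * m + 1) * poly ((pderiv ^^ Suc m) (cheb k)) 1
   = (real (k * k) - real (m * m)) * poly ((pderiv ^^ m) (cheb k)) 1"
proof -
  have "poly ((1 - pX * pX) * (pderiv ^^ Suc (Suc m)) (cheb k)
   - of_nat (2 * m + 1) * pX * (pderiv ^^ Suc m) (cheb k)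
   + (of_nat (k * k) - of_nat (m * m)) * (pderiv ^^ m) (cheb k)) 1 = 0"
    by (simp only: ODEm) simp
  then show ?thesis by (simp add: algebra_simps)
qed

lemma odd_dfact_Suc: "odd_dfact (Suc m) = odd_dfact m * (2 * m + 1)"
  by (simp add: odd_dfact_def)

lemma odd_dfact_pos: "odd_dfact m > 0"
  by (induction m) (simp_all add: odd_dfact_Suc, simp add: odd_dfact_def)

lemma val_bound: "poly ((pderiv ^^ m) (cheb k)) 1 \<le> real k ^ (2 * m) / real (odd_dfact m)"
proof (induction m)
  case 0 then show ?case by (simp add: cheb_one odd_dfact_def)
next
  case (Suc m)
  have nn: "poly ((pderiv ^^ m) (cheb k)) 1 \<ge> 0"
    using nnc_bound[OF nnc_hpderiv, of 1 m k] by simp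
  have "real (2 * m + 1) * poly ((pderiv ^^ Suc m) (cheb k)) 1
     \<le> real (k * k) * poly ((pderiv ^^ m) (cheb k)) 1"
    unfolding val_rec using nn by (intro mult_right_mono) auto
  also have "\<dots> \<le> real (k * k) * (real k ^ (2 * m) / real (odd_dfact m))"
    using Suc by (intro mult_left_mono) auto
  finally have "poly ((pderiv ^^ Suc m) (cheb k)) 1 \<le> real (k * k) * (real k ^ (2 * m) / real (odd_dfact m)) / real (2 * m + 1)"
    by (subst pos_le_divide_eq) (auto simp: mult.commute)
  also have "\<dots> = real k ^ (2 * Suc m) / real (odd_dfact (Suc m))"
    by (simp add: odd_dfact_Suc field_simps power_mult_distrib power2_eq_square)
  finally show ?case .
qed

lemma deriv_bound: "x \<in> {-1..1} \<Longrightarrow> \<bar>poly ((pderiv ^^ m) (cheb k)) x\<bar> \<le> real k ^ (2 * m) / real (odd_dfact m)"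
  using nnc_bound[OF nnc_hpderiv, of x m k] val_bound[of m k] by linarith



lemma hpderiv_zero: "degree p < m \<Longrightarrow> (pderiv ^^ m) p = 0"
  by (rule poly_eqI) (simp add: coeff_higher_pderiv coeff_eq_0)

lemma taylor_poly:
  fixes p :: "real poly" and x y :: real
  assumes "(pderiv ^^ n) p = 0"
  shows "poly p y = (\<Sum>j<n. poly ((pderiv ^^ j) p) x / fact j * (y - x) ^ j)"
proof -
  define dif where "dif = (\<lambda>m h. poly ((pderiv ^^ m) p) (x + h))"
  have d: "\<forall>m h. DERIV (dif m) h :> dif (Suc m) h"
  proof (intro allI)
    fix m h
    have "((\<lambda>h. poly ((pderiv ^^ m) p) (x + h)) has_real_derivative
            poly (pderiv ((pderiv ^^ m) p)) (x + h) * 1) (at h)"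
      by (rule DERIV_chain2[OF poly_DERIV]) (auto intro!: derivative_eq_intros)
    then show "DERIV (dif m) h :> dif (Suc m) h" by (simp add: dif_def)
  qed
  obtain t where "(\<lambda>h. poly p (x + h)) (y - x) =
     (\<Sum>m<n. (dif m 0 / fact m) * (y - x) ^ m) + (dif n t / fact n) * (y - x) ^ n"
    using Maclaurin_all_le[where diff=dif and f="\<lambda>h. poly p (x + h)" and x="y - x" and n=n, OF _ d]
    by (auto simp: dif_def)
  then show ?thesis using assms by (simp add: dif_def)
qed

definition mom :: "real \<Rightarrow> nat \<Rightarrow> real" where
  "mom \<sigma> j = (if even j then fact j / ((2 / \<sigma>\<^sup>2) ^ (j div 2) * fact (j div 2)) else 0)"

lemma mom_int:
  assumes "\<sigma> > 0"
  shows "has_bochner_integral lborel (\<lambda>y. normal_density x \<sigma> y * (y - x) ^ j) (mom \<sigma> j)"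
proof (cases "even j")
  case True
  then have j: "j = 2 * (j div 2)" by simp
  show ?thesis using normal_moment_even[where \<sigma>=\<sigma> and k="j div 2" and \<mu>=x] assms True
    by (subst j) (simp add: mom_def)
next
  case False
  then have j: "j = 2 * (j div 2) + 1" by simp
  show ?thesis using normal_moment_odd[where \<sigma>=\<sigma> and k="j div 2" and \<mu>=x] assms False
    by (subst j) (simp add: mom_def)
qed

lemma kernel_eq:
  assumes "\<sigma> > 0"
  shows "(1 / (sqrt (2 * pi) * \<sigma>)) * exp (- ((x - y)\<^sup>2) / (2 * \<sigma>\<^sup>2)) = normal_density x \<sigma> y"
proof -
  have "sqrt (2 * pi * \<sigma>\<^sup>2) = sqrt (2 * pi) * \<sigma>"
    using assms by (simp add: real_sqrt_mult)
  then show ?thesis unfolding normal_density_def by (simp add: power2_commute)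
qed

lemma sum_even_odd: fixes f :: "nat \<Rightarrow> real" shows "(\<Sum>j<2 * M. f j) = (\<Sum>i<M. f (2 * i) + f (2 * i + 1))"
  by (induction M) (simp_all add: algebra_simps)

lemma sum_shift1: fixes g :: "nat \<Rightarrow> real" shows "(\<Sum>i<Suc K. g i) = g 0 + (\<Sum>i=1..K. g i)"
  by (induction K) (simp_all add: add.assoc)

lemma fact_dfact: "fact (2 * i) = (2 ^ i * fact i * real (odd_dfact i) :: real)"
proof (induction i)
  case 0 then show ?case by (simp add: odd_dfact_def)
next
  case (Suc i)
  have "fact (2 * Suc i) = (real (2 * i + 2) * real (2 * i + 1)) * (fact (2 * i) :: real)"
    by (simp add: algebra_simps)
  also have "\<dots> = 2 ^ Suc i * fact (Suc i) * real (odd_dfact (Suc i))"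
    unfolding Suc by (simp add: odd_dfact_Suc algebra_simps)
  finally show ?case .
qed

lemma term_bound:
  assumes "\<sigma> > 0" and "\<bar>d\<bar> \<le> real k ^ (2 * (2 * i)) / real (odd_dfact (2 * i))"
  shows "\<bar>d / fact (2 * i) * mom \<sigma> (2 * i)\<bar>
     \<le> real (odd_dfact i) / (fact (2 * i) * real (odd_dfact (2 * i))) * (real k ^ 2 * \<sigma>) ^ (2 * i)"
proof -
  have od: "real (odd_dfact i) > 0" "real (odd_dfact (2 * i)) > 0"
    using odd_dfact_pos[of i] odd_dfact_pos[of "2 * i"] by simp_all
  have "mom \<sigma> (2 * i) = fact (2 * i) / ((2 / \<sigma>\<^sup>2) ^ i * fact i)" by (simp add: mom_def)
  also have "\<dots> = fact (2 * i) * (\<sigma>\<^sup>2) ^ i / (2 ^ i * fact i)"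
    using assms(1) by (simp add: power_divide field_simps)
  also have "\<dots> = fact (2 * i) * \<sigma> ^ (2 * i) / (2 ^ i * fact i)" by (simp add: power_mult)
  finally have m: "mom \<sigma> (2 * i) = fact (2 * i) * \<sigma> ^ (2 * i) / (2 ^ i * fact i)" .
  have "\<bar>d / fact (2 * i) * mom \<sigma> (2 * i)\<bar> = \<bar>d\<bar> * (\<sigma> ^ (2 * i) / (2 ^ i * fact i))"
    unfolding m using assms(1) by (simp add: abs_mult field_simps)
  also have "\<dots> \<le> real k ^ (2 * (2 * i)) / real (odd_dfact (2 * i)) * (\<sigma> ^ (2 * i) / (2 ^ i * fact i))"
    using assms by (intro mult_right_mono) auto
  also have "\<dots> = real (odd_dfact i) / (fact (2 * i) * real (odd_dfact (2 * i))) * (real k ^ 2 * \<sigma>) ^ (2 * i)"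
    unfolding fact_dfact using od by (simp add: field_simps power_mult_distrib power_mult[symmetric])
  finally show ?thesis .
qed

theorem lemma8:
  fixes \<sigma> :: real and k :: nat
  assumes "\<sigma> > 0"
  shows "sup_norm_11 (\<lambda>x. poly (chebyshev_T k) x - gauss_smooth \<sigma> (poly (chebyshev_T k)) x)
    \<le> (\<Sum>l=1..k div 2. real (odd_dfact l) / (fact (2 * l) * real (odd_dfact (2 * l)))
          * (real k ^ 2 * \<sigma>) ^ (2 * l))"
proof -
  define K where "K = k div 2"
  define n where "n = 2 * Suc K"
  define T where "T = cheb k"
  define a where "a = (\<lambda>x j. poly ((pderiv ^^ j) T) x / fact j)"
  have Dn: "(pderiv ^^ n) T = 0"
  proof -
    have "k < n" unfolding n_def K_def by presburger
    then show ?thesis unfolding T_def using degree_cheb[of k] by (intro hpderiv_zero) simp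
  qed
  have pt: "\<bar>poly T x - gauss_smooth \<sigma> (poly T) x\<bar>
      \<le> (\<Sum>l=1..K. real (odd_dfact l) / (fact (2 * l) * real (odd_dfact (2 * l)))
          * (real k ^ 2 * \<sigma>) ^ (2 * l))" if x: "x \<in> {-1..1}" for x
  proof -
    have hb: "has_bochner_integral lborel
       (\<lambda>y. (1 / (sqrt (2 * pi) * \<sigma>)) * exp (- ((x - y)\<^sup>2) / (2 * \<sigma>\<^sup>2)) * poly T y)
       (\<Sum>j<n. a x j * mom \<sigma> j)"
    proof -
      have "has_bochner_integral lborel (\<lambda>y. \<Sum>j<n. a x j * (normal_density x \<sigma> y * (y - x) ^ j))
         (\<Sum>j<n. a x j * mom \<sigma> j)"
        by (intro has_bochner_integral_sum has_bochner_integral_mult_right mom_int assms)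
      moreover have "(\<lambda>y. \<Sum>j<n. a x j * (normal_density x \<sigma> y * (y - x) ^ j)) =
          (\<lambda>y. (1 / (sqrt (2 * pi) * \<sigma>)) * exp (- ((x - y)\<^sup>2) / (2 * \<sigma>\<^sup>2)) * poly T y)"
      proof
        fix y
        show "(\<Sum>j<n. a x j * (normal_density x \<sigma> y * (y - x) ^ j)) =
          (1 / (sqrt (2 * pi) * \<sigma>)) * exp (- ((x - y)\<^sup>2) / (2 * \<sigma>\<^sup>2)) * poly T y"
          unfolding kernel_eq[OF assms] taylor_poly[OF Dn, of y x] a_def
          by (simp add: sum_distrib_left algebra_simps)
      qed
      ultimately show ?thesis by simp
    qed
    have gs: "gauss_smooth \<sigma> (poly T) x = (\<Sum>j<n. a x j * mom \<sigma> j)"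
      unfolding gauss_smooth_def using hb by (rule has_bochner_integral_integral_eq)
    have "(\<Sum>j<n. a x j * mom \<sigma> j) = (\<Sum>i<Suc K. a x (2 * i) * mom \<sigma> (2 * i))"
      unfolding n_def sum_even_odd by (simp add: mom_def)
    also have "\<dots> = poly T x + (\<Sum>i=1..K. a x (2 * i) * mom \<sigma> (2 * i))"
      unfolding sum_shift1 by (simp add: a_def mom_def)
    finally have "poly T x - gauss_smooth \<sigma> (poly T) x = - (\<Sum>i=1..K. a x (2 * i) * mom \<sigma> (2 * i))"
      using gs by simp
    then have "\<bar>poly T x - gauss_smooth \<sigma> (poly T) x\<bar> \<le> (\<Sum>i=1..K. \<bar>a x (2 * i) * mom \<sigma> (2 * i)\<bar>)"
      by (simp add: sum_abs)
    also have "\<dots> \<le> (\<Sum>l=1..K. real (odd_dfact l) / (fact (2 * l) * real (odd_dfact (2 * l)))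
          * (real k ^ 2 * \<sigma>) ^ (2 * l))"
      unfolding a_def T_def
      by (intro sum_mono term_bound assms deriv_bound x)
    finally show ?thesis .
  qed
  show ?thesis
    unfolding sup_norm_11_def chebyshev_T_eq T_def[symmetric] K_def[symmetric]
    by (rule cSUP_least) (use pt in auto)
qed

end
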